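(* For every $t\in\mathbb{N}$ there exists $n_0(t)$ such that for all $n\ge n_0(t)$ the following holds. Let $\mathcal{F}\subseteq\mathcal{M}_{2n}$ be a $t$-intersecting family. For any distinct vertices $i,j,k$ of $K_{2n}$, \[|\mathcal{F}\!\downarrow_{ij}|\cdot|\mathcal{F}\!\downarrow_{ik}|\le\big((2(n-t-1)-1)!!\big)^2.\]
   Context: $\mathcal{M}_{2n}$ is the set of perfect matchings of $K_{2n}$. A family $\mathcal{F}$ is $t$-intersecting if $|m\cap m'|\ge t$ for all $m,m'\in\mathcal{F}$. For an edge $ij$, $\mathcal{F}\!\downarrow_{ij}=\{m\in\mathcal{F}: \{i,j\}\in m\}$. $(2k-1)!!=1\cdot3\cdots(2k-1)$. *)

theory Defs
  imports Main
begin

definition perfect_matchings :: "nat \<Rightarrow> nat set set set" where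
  "perfect_matchings n =
     {m. (\<forall>e\<in>m. \<exists>a b. a \<noteq> b \<and> e = {a, b} \<and> a < 2 * n \<and> b < 2 * n) \<and>
         (\<forall>v<2 * n. \<exists>!e. e \<in> m \<and> v \<in> e)}"

definition t_intersecting :: "nat \<Rightarrow> 'a set set \<Rightarrow> bool" where
  "t_intersecting t F \<longleftrightarrow> (\<forall>m\<in>F. \<forall>m'\<in>F. card (m \<inter> m') \<ge> t)"

definition restrict_edge :: "nat set set set \<Rightarrow> nat \<Rightarrow> nat \<Rightarrow> nat set set set" where
  "restrict_edge F i j = {m \<in> F. {i, j} \<in> m}"

(* dfact k = (2k-1)!! = 1 * 3 * ... * (2k-1); dfact 0 = 1 *)
fun dfact :: "nat \<Rightarrow> nat" where
  "dfact 0 = 1"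
| "dfact (Suc k) = (2 * k + 1) * dfact k"

end

theory Submission
  imports Defs "HOL-Real_Asymp.Real_Asymp"
begin

definition PMon :: "nat set \<Rightarrow> nat set set set" where
  "PMon S = {m. (\<forall>e\<in>m. \<exists>a b. a \<noteq> b \<and> e = {a, b} \<and> a \<in> S \<and> b \<in> S) \<and>
               (\<forall>v\<in>S. \<exists>!e. e \<in> m \<and> v \<in> e)}"

lemma PM_eq: "perfect_matchings n = PMon {0..<2*n}"
  unfolding perfect_matchings_def PMon_def
  apply (rule Collect_cong)
  apply (rule conj_cong)
   apply simp
  apply (simp only: atLeastLessThan_iff Ball_def)
  apply simp
  done

lemma PMon_edge: "m \<in> PMon S \<Longrightarrow> e \<in> m \<Longrightarrow> \<exists>a b. a \<noteq> b \<and> e = {a, b} \<and> a \<in> S \<and> b \<in> S"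
  unfolding PMon_def by blast

lemma PMon_sub: "m \<in> PMon S \<Longrightarrow> e \<in> m \<Longrightarrow> e \<subseteq> S"
  using PMon_edge by blast

lemma PMon_card2: "m \<in> PMon S \<Longrightarrow> e \<in> m \<Longrightarrow> card e = 2"
  using PMon_edge by fastforce

lemma PMon_disj: "m \<in> PMon S \<Longrightarrow> e \<in> m \<Longrightarrow> e' \<in> m \<Longrightarrow> v \<in> e \<Longrightarrow> v \<in> e' \<Longrightarrow> e = e'"
proof -
  assume m: "m \<in> PMon S" and e: "e \<in> m" "e' \<in> m" "v \<in> e" "v \<in> e'"
  then have "v \<in> S" using PMon_sub by blast
  with m have "\<exists>!e. e \<in> m \<and> v \<in> e" unfolding PMon_def by blast
  with e show ?thesis by blast
qed

lemma PMon_cover: "m \<in> PMon S \<Longrightarrow> v \<in> S \<Longrightarrow> \<exists>e\<in>m. v \<in> e"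
  unfolding PMon_def by blast

lemma PMon_subPow: "PMon S \<subseteq> Pow (Pow S)"
  using PMon_sub by blast

lemma PMon_finite: "finite S \<Longrightarrow> finite (PMon S)"
  using PMon_subPow by (meson finite_Pow_iff finite_subset)

lemma PMon_mfinite: "finite S \<Longrightarrow> m \<in> PMon S \<Longrightarrow> finite m"
  using PMon_subPow by (meson PowD finite_Pow_iff finite_subset subsetD)

lemma PMon_card: assumes "finite S" "m \<in> PMon S" shows "card S = 2 * card m"
proof -
  have U: "\<Union>m = S" using PMon_sub[OF assms(2)] PMon_cover[OF assms(2)] by blast
  have pw: "pairwise disjnt m"
    unfolding pairwise_def disjnt_def using PMon_disj[OF assms(2)] by blast
  have fe: "\<And>e. e \<in> m \<Longrightarrow> finite e" using PMon_sub[OF assms(2)] assms(1) finite_subset by blast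
  have "card (\<Union>m) = sum card m" by (rule card_Union_disjoint[OF pw fe])
  also have "\<dots> = sum (\<lambda>_. 2) m" using PMon_card2[OF assms(2)] by simp
  also have "\<dots> = 2 * card m" by simp
  finally show ?thesis using U by simp
qed

lemma PMon_remove:
  assumes m: "m \<in> PMon S" and e: "e \<in> m"
  shows "m - {e} \<in> PMon (S - e)"
  unfolding PMon_def
proof (intro CollectI conjI ballI)
  fix e' assume e': "e' \<in> m - {e}"
  then obtain a b where ab: "a \<noteq> b" "e' = {a,b}" "a \<in> S" "b \<in> S" using PMon_edge[OF m] by blast
  have "a \<notin> e" using PMon_disj[OF m] e e' ab by blast
  moreover have "b \<notin> e" using PMon_disj[OF m] e e' ab by blast
  ultimately show "\<exists>a b. a \<noteq> b \<and> e' = {a, b} \<and> a \<in> S - e \<and> b \<in> S - e" using ab by blast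
next
  fix v assume v: "v \<in> S - e"
  then obtain e' where e': "e' \<in> m" "v \<in> e'" using PMon_cover[OF m] by blast
  then have "e' \<noteq> e" using v by blast
  then show "\<exists>!e'. e' \<in> m - {e} \<and> v \<in> e'" using e' PMon_disj[OF m] by blast
qed

lemma PMon_count: "finite S \<Longrightarrow> card S = 2 * r \<Longrightarrow> card (PMon S) \<le> dfact r"
proof (induction r arbitrary: S)
  case 0
  then have "S = {}" by simp
  have "PMon S \<subseteq> {{}}"
  proof
    fix m assume m: "m \<in> PMon S"
    have "m = {}"
    proof (rule ccontr)
      assume "m \<noteq> {}"
      then obtain e where "e \<in> m" by blast
      then obtain a b where "e = {a,b}" "a \<in> S" using PMon_edge[OF m] by blast
      then show False using \<open>S = {}\<close> by simp
    qed
    then show "m \<in> {{}}" by simp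
  qed
  then have "card (PMon S) \<le> card {{}::nat set set}" by (intro card_mono) auto
  then show ?case by simp
next
  case (Suc r)
  have "S \<noteq> {}" using Suc.prems by (metis card.empty mult_is_0 nat.distinct(1) zero_neq_numeral)
  then obtain v where v: "v \<in> S" by blast
  define K where "K = (\<Union>u\<in>S-{v}. insert {v,u} ` PMon (S - {v,u}))"
  have sub: "PMon S \<subseteq> K"
  proof
    fix m assume m: "m \<in> PMon S"
    obtain e where e: "e \<in> m" "v \<in> e" using PMon_cover[OF m v] by blast
    obtain a b where ab: "a \<noteq> b" "e = {a,b}" "a \<in> S" "b \<in> S" using PMon_edge[OF m e(1)] by blast
    obtain u where u: "e = {v,u}" "u \<in> S - {v}" using ab e(2) by blast
    have "m - {e} \<in> PMon (S - {v,u})" using PMon_remove[OF m e(1)] u by simp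
    moreover have "m = insert {v,u} (m - {e})" using e u by blast
    ultimately show "m \<in> K" unfolding K_def using u by blast
  qed
  have "card K \<le> (\<Sum>u\<in>S-{v}. card (insert {v,u} ` PMon (S - {v,u})))"
    unfolding K_def by (rule card_UN_le) (use Suc.prems in auto)
  also have "\<dots> \<le> (\<Sum>u\<in>S-{v}. dfact r)"
  proof (rule sum_mono)
    fix u assume u: "u \<in> S - {v}"
    have "card (insert {v,u} ` PMon (S - {v,u})) \<le> card (PMon (S - {v,u}))" by (rule card_image_le) (use Suc.prems PMon_finite in auto)
    also have "\<dots> \<le> dfact r"
    proof (rule Suc.IH)
      show "finite (S - {v, u})" using Suc.prems by simp
      have "card (S - {v,u}) = card S - 2" using u v Suc.prems(1) by (simp add: card_Diff_subset)
      then show "card (S - {v, u}) = 2 * r" using Suc.prems(2) by simp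
    qed
    finally show "card (insert {v,u} ` PMon (S - {v,u})) \<le> dfact r" .
  qed
  also have "\<dots> = card (S - {v}) * dfact r" by simp
  also have "card (S - {v}) = 2*r+1" using Suc.prems v by simp
  finally have "card K \<le> dfact (Suc r)" by simp
  moreover have "finite K" unfolding K_def using Suc.prems PMon_finite by auto
  ultimately have "card (PMon S) \<le> card K" using sub by (intro card_mono)
  then show ?case using \<open>card K \<le> dfact (Suc r)\<close> by linarith
qed

lemma PMon_count_P:
  assumes "finite P"
  shows "finite S \<Longrightarrow> card S = 2 * r \<Longrightarrow> card {m \<in> PMon S. P \<subseteq> m} \<le> dfact (r - card P)"
  using assms
proof (induction P arbitrary: S r rule: finite_induct)
  case empty
  then show ?case using PMon_count[of S r] by simp
next
  case (insert e P)
  show ?case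
  proof (cases "{m \<in> PMon S. insert e P \<subseteq> m} = {}")
    case True then show ?thesis unfolding True by simp
  next
    case False
    then obtain m0 where m0: "m0 \<in> PMon S" "e \<in> m0" by blast
    have eS: "e \<subseteq> S" and ce: "card e = 2" using PMon_sub[OF m0] PMon_card2[OF m0] by auto
    have cS: "card (S - e) = 2 * (r - 1)" using eS ce insert.prems
      by (simp add: card_Diff_subset finite_subset)
    have "card {m \<in> PMon S. insert e P \<subseteq> m} \<le> card {m \<in> PMon (S - e). P \<subseteq> m}"
    proof (rule card_inj_on_le)
      show "inj_on (\<lambda>m. m - {e}) {m \<in> PMon S. insert e P \<subseteq> m}"
        by (rule inj_onI) (metis (no_types, lifting) insert_Diff mem_Collect_eq insert_subset)
      show "(\<lambda>m. m - {e}) ` {m \<in> PMon S. insert e P \<subseteq> m} \<subseteq> {m \<in> PMon (S - e). P \<subseteq> m}"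
        using PMon_remove insert.hyps(2) by blast
      show "finite {m \<in> PMon (S - e). P \<subseteq> m}" using PMon_finite insert.prems by auto
    qed
    also have "\<dots> \<le> dfact (r - 1 - card P)"
      using insert.IH[of "S - e" "r - 1"] cS insert.prems by auto
    also have "r - 1 - card P = r - card (insert e P)" using insert.hyps by simp
    finally show ?thesis .
  qed
qed

lemma cnt_le:
  assumes "finite P"
  shows "card {m \<in> perfect_matchings n. P \<subseteq> m} \<le> dfact (n - card P)"
  using PMon_count_P[OF assms, of "{0..<2*n}" n] by (simp add: PM_eq)

lemma PM_finite: "finite (perfect_matchings n)"
  by (simp add: PM_eq PMon_finite)

lemma PM_card: "m \<in> perfect_matchings n \<Longrightarrow> card m = n"
  using PMon_card[of "{0..<2*n}" m] by (simp add: PM_eq)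

lemma PM_mfinite: "m \<in> perfect_matchings n \<Longrightarrow> finite m"
  using PMon_mfinite[of "{0..<2*n}" m] by (simp add: PM_eq)

lemma PM_edge_sub: "m \<in> perfect_matchings n \<Longrightarrow> e \<in> m \<Longrightarrow> e \<subseteq> {0..<2*n}"
  using PMon_sub by (simp add: PM_eq)

abbreviation sub :: "nat set set set \<Rightarrow> nat set set \<Rightarrow> nat set set set" where
  "sub G E \<equiv> {g \<in> G. E \<subseteq> g}"

definition spread :: "nat \<Rightarrow> nat set set set \<Rightarrow> nat set set \<Rightarrow> bool" where
  "spread n G E \<longleftrightarrow> sub G E \<noteq> {} \<and> (\<forall>e. e \<notin> E \<longrightarrow> (n+1) * card (sub G (insert e E)) \<le> card (sub G E))"

lemma core_exists:
  assumes G: "G \<subseteq> perfect_matchings n" and big: "(n+1)^q * dfact (n - q) < card G"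
  shows "\<exists>E. finite E \<and> card E < q \<and> spread n G E"
proof -
  define EU where "EU = Pow {0..<2*n}"
  define \<E> where "\<E> = {E. E \<subseteq> EU \<and> card E \<le> q}"
  define f where "f E = (n+1)^(card E) * card (sub G E)" for E
  have finEU: "finite EU" unfolding EU_def by simp
  have fin\<E>: "finite \<E>" unfolding \<E>_def using finEU by (simp add: finite_subset)
  have ne: "{} \<in> \<E>" unfolding \<E>_def by simp
  define E where "E = (SOME E. E \<in> \<E> \<and> f E = Max (f ` \<E>))"
  have "Max (f ` \<E>) \<in> f ` \<E>" using fin\<E> ne by (intro Max_in) auto
  then have "\<exists>E. E \<in> \<E> \<and> f E = Max (f ` \<E>)" by auto
  then have E: "E \<in> \<E>" "f E = Max (f ` \<E>)" unfolding E_def by (metis (mono_tags, lifting) someI_ex)+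
  have maxE: "f E' \<le> f E" if "E' \<in> \<E>" for E'
    using E(2) fin\<E> that by simp
  have finE: "finite E" using E(1) finEU unfolding \<E>_def by (auto simp: finite_subset)
  have "f {} = card G" unfolding f_def using G by simp
  then have fbig: "card G \<le> f E" using maxE[OF ne] by simp
  have subcnt: "card (sub G E') \<le> dfact (n - card E')" if "finite E'" for E'
  proof -
    have "card (sub G E') \<le> card {m \<in> perfect_matchings n. E' \<subseteq> m}"
      using G by (intro card_mono) (auto simp: PM_finite)
    also have "\<dots> \<le> dfact (n - card E')" by (rule cnt_le[OF that])
    finally show ?thesis .
  qed
  have cq: "card E < q"
  proof (rule ccontr)
    assume "\<not> card E < q"
    then have "card E = q" using E(1) unfolding \<E>_def by simp
    then have "f E \<le> (n+1)^q * dfact (n - q)" unfolding f_def using subcnt[OF finE] by simp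
    then show False using fbig big by simp
  qed
  have nz: "sub G E \<noteq> {}"
  proof
    assume "sub G E = {}"
    then have "f E = 0" unfolding f_def by (metis card.empty mult_0_right)
    then show False using fbig big by simp
  qed
  have sp: "(n+1) * card (sub G (insert e E)) \<le> card (sub G E)" if e: "e \<notin> E" for e
  proof (cases "e \<in> EU")
    case True
    then have "insert e E \<in> \<E>" using E(1) cq finE e unfolding \<E>_def by auto
    then have "f (insert e E) \<le> f E" by (rule maxE)
    then have "(n+1)^(card E) * ((n+1) * card (sub G (insert e E))) \<le> (n+1)^(card E) * card (sub G E)"
      unfolding f_def using finE e by (simp add: algebra_simps)
    then show ?thesis by simp
  next
    case False
    have "sub G (insert e E) = {}"
    proof (rule ccontr)
      assume "sub G (insert e E) \<noteq> {}"
      then obtain g where "g \<in> G" "e \<in> g" by blast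
      then have "e \<subseteq> {0..<2*n}" using G PM_edge_sub by blast
      then show False using False unfolding EU_def by simp
    qed
    then show ?thesis by (metis card.empty mult_0_right zero_le)
  qed
  show ?thesis using finE cq nz sp unfolding spread_def by blast
qed

lemma hit:
  assumes G: "G \<subseteq> perfect_matchings n" and sp: "spread n G E"
    and c: "c \<in> perfect_matchings n"
    and H: "\<forall>g\<in>G. E \<subseteq> g \<longrightarrow> (\<exists>e\<in>c. e \<notin> E \<and> e \<in> g)"
  shows False
proof -
  have finG: "finite G" using G PM_finite finite_subset by blast
  have finc: "finite c" using PM_mfinite[OF c] .
  have "sub G E \<subseteq> (\<Union>e\<in>c - E. sub G (insert e E))"
  proof
    fix g assume g: "g \<in> sub G E"
    then obtain e where "e \<in> c" "e \<notin> E" "e \<in> g" using H by blast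
    then show "g \<in> (\<Union>e\<in>c - E. sub G (insert e E))" using g by blast
  qed
  moreover have "finite (\<Union>e\<in>c - E. sub G (insert e E))"
    by (rule finite_subset[OF _ finG]) blast
  ultimately have "card (sub G E) \<le> card (\<Union>e\<in>c - E. sub G (insert e E))"
    by (intro card_mono)
  also have "\<dots> \<le> (\<Sum>e\<in>c - E. card (sub G (insert e E)))"
    by (rule card_UN_le) (use finc in auto)
  finally have "(n+1) * card (sub G E) \<le> (n+1) * (\<Sum>e\<in>c - E. card (sub G (insert e E)))"
    by (rule mult_left_mono) simp
  also have "\<dots> = (\<Sum>e\<in>c - E. (n+1) * card (sub G (insert e E)))" by (simp add: sum_distrib_left)
  also have "\<dots> \<le> (\<Sum>e\<in>c - E. card (sub G E))"
    using sp unfolding spread_def by (intro sum_mono) auto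
  also have "\<dots> = card (c - E) * card (sub G E)" by simp
  also have "\<dots> \<le> n * card (sub G E)"
    using PM_card[OF c] finc by (intro mult_right_mono) (auto simp: card_mono)
  finally have "card (sub G E) = 0" by simp
  then show False using sp finG unfolding spread_def by simp
qed

definition cfg :: "nat \<Rightarrow> nat \<Rightarrow> nat set set set \<Rightarrow> nat set set set \<Rightarrow> nat set \<Rightarrow> nat set \<Rightarrow> bool" where
  "cfg n t X Y ex ey \<longleftrightarrow> X \<subseteq> perfect_matchings n \<and> Y \<subseteq> perfect_matchings n \<and>
     (\<forall>x\<in>X. ex \<in> x \<and> ey \<notin> x) \<and> (\<forall>y\<in>Y. ey \<in> y \<and> ex \<notin> y) \<and>
     (\<forall>x\<in>X. \<forall>y\<in>Y. t \<le> card (x \<inter> y))"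

lemma cfgD:
  assumes "cfg n t X Y ex ey"
  shows "X \<subseteq> perfect_matchings n" "Y \<subseteq> perfect_matchings n"
    "\<And>x. x \<in> X \<Longrightarrow> ex \<in> x" "\<And>x. x \<in> X \<Longrightarrow> ey \<notin> x"
    "\<And>y. y \<in> Y \<Longrightarrow> ey \<in> y" "\<And>y. y \<in> Y \<Longrightarrow> ex \<notin> y"
    "\<And>x y. x \<in> X \<Longrightarrow> y \<in> Y \<Longrightarrow> t \<le> card (x \<inter> y)"
  using assms unfolding cfg_def by auto

lemma cfgI:
  assumes "X \<subseteq> perfect_matchings n" "Y \<subseteq> perfect_matchings n"
    "\<And>x. x \<in> X \<Longrightarrow> ex \<in> x" "\<And>x. x \<in> X \<Longrightarrow> ey \<notin> x"
    "\<And>y. y \<in> Y \<Longrightarrow> ey \<in> y" "\<And>y. y \<in> Y \<Longrightarrow> ex \<notin> y"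
    "\<And>x y. x \<in> X \<Longrightarrow> y \<in> Y \<Longrightarrow> t \<le> card (x \<inter> y)"
  shows "cfg n t X Y ex ey"
  using assms unfolding cfg_def by auto

lemma cfg_sym: assumes "cfg n t X Y ex ey" shows "cfg n t Y X ey ex"
proof (rule cfgI)
  fix x y assume "x \<in> Y" "y \<in> X"
  then have "t \<le> card (y \<inter> x)" using cfgD(7)[OF assms] by blast
  then show "t \<le> card (x \<inter> y)" by (simp only: Int_commute)
qed (use cfgD[OF assms] in auto)

lemma cfg_mono: assumes "cfg n t X Y ex ey" "X' \<subseteq> X" shows "cfg n t X' Y ex ey"
  by (rule cfgI) (use cfgD[OF assms(1)] assms(2) in auto)

lemma U1:
  assumes s: "cfg n t X Y ex ey" and sp: "spread n X E" and y: "y \<in> Y"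
  shows "t \<le> card (y \<inter> E)"
proof (rule ccontr)
  assume lt: "\<not> t \<le> card (y \<inter> E)"
  have yP: "y \<in> perfect_matchings n" using cfgD(2)[OF s] y by blast
  have finy: "finite y" using PM_mfinite[OF yP] .
  show False
  proof (rule hit[OF _ sp yP])
    show "X \<subseteq> perfect_matchings n" using cfgD(1)[OF s] .
    show "\<forall>g\<in>X. E \<subseteq> g \<longrightarrow> (\<exists>e\<in>y. e \<notin> E \<and> e \<in> g)"
    proof (intro ballI impI)
      fix g assume g: "g \<in> X" "E \<subseteq> g"
      have tg: "t \<le> card (g \<inter> y)" using cfgD(7)[OF s] g y by blast
      show "\<exists>e\<in>y. e \<notin> E \<and> e \<in> g"
      proof (rule ccontr)
        assume "\<not> (\<exists>e\<in>y. e \<notin> E \<and> e \<in> g)"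
        then have "g \<inter> y \<subseteq> y \<inter> E" by blast
        then have "card (g \<inter> y) \<le> card (y \<inter> E)" using finy by (intro card_mono) auto
        then show False using tg lt by simp
      qed
    qed
  qed
qed

lemma core_avoid:
  assumes s: "cfg n t X Y ex ey" and sp: "spread n X E"
  shows "ey \<notin> E"
proof
  assume "ey \<in> E"
  have "sub X E \<noteq> {}" using sp unfolding spread_def by simp
  then obtain x where "x \<in> sub X E" by blast
  then have "x \<in> X" "E \<subseteq> x" by auto
  then show False using cfgD(4)[OF s] \<open>ey \<in> E\<close> by blast
qed

lemma XT_bound:
  assumes s: "cfg n t X Y ex ey" and T: "finite T" "card T = t" "ex \<notin> T"
  shows "card {a\<in>X. T \<subseteq> a} \<le> dfact (n - (t+1))"
proof -
  have "card {a\<in>X. T \<subseteq> a} \<le> card {m \<in> perfect_matchings n. insert ex T \<subseteq> m}"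
    using cfgD(1,3)[OF s] by (intro card_mono) (auto simp: PM_finite)
  also have "\<dots> \<le> dfact (n - card (insert ex T))" by (rule cnt_le) (use T in simp)
  finally show ?thesis using T by simp
qed

lemma Xplus:
  assumes s: "cfg n t X Y ex ey" and U: "finite U" "ex \<notin> U"
  shows "card {a\<in>X. t+1 \<le> card (a \<inter> U)} \<le> (card U choose (t+1)) * dfact (n - (t+2))"
proof -
  define \<S> where "\<S> = {S. S \<subseteq> U \<and> card S = t+1}"
  have fin\<S>: "finite \<S>" unfolding \<S>_def using U by simp
  have "{a\<in>X. t+1 \<le> card (a \<inter> U)} \<subseteq> (\<Union>S\<in>\<S>. {m \<in> perfect_matchings n. insert ex S \<subseteq> m})"
  proof
    fix a assume a: "a \<in> {a\<in>X. t+1 \<le> card (a \<inter> U)}"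
    then obtain S where S: "S \<subseteq> a \<inter> U" "card S = t+1"
      using obtain_subset_with_card_n by (metis (no_types, lifting) mem_Collect_eq)
    have "a \<in> perfect_matchings n" "ex \<in> a" using a cfgD(1,3)[OF s] by auto
    then show "a \<in> (\<Union>S\<in>\<S>. {m \<in> perfect_matchings n. insert ex S \<subseteq> m})"
      using S unfolding \<S>_def by blast
  qed
  then have "card {a\<in>X. t+1 \<le> card (a \<inter> U)} \<le> card (\<Union>S\<in>\<S>. {m \<in> perfect_matchings n. insert ex S \<subseteq> m})"
    using fin\<S> by (intro card_mono) (auto simp: PM_finite)
  also have "\<dots> \<le> (\<Sum>S\<in>\<S>. card {m \<in> perfect_matchings n. insert ex S \<subseteq> m})"
    by (rule card_UN_le[OF fin\<S>])
  also have "\<dots> \<le> (\<Sum>S\<in>\<S>. dfact (n - (t+2)))"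
  proof (rule sum_mono)
    fix S assume S: "S \<in> \<S>"
    then have fS: "finite S" "card S = t+1" "ex \<notin> S" unfolding \<S>_def using U finite_subset by auto
    have "card {m \<in> perfect_matchings n. insert ex S \<subseteq> m} \<le> dfact (n - card (insert ex S))"
      by (rule cnt_le) (use fS in simp)
    then show "card {m \<in> perfect_matchings n. insert ex S \<subseteq> m} \<le> dfact (n - (t+2))" using fS by simp
  qed
  also have "\<dots> = (card U choose (t+1)) * dfact (n - (t+2))"
    unfolding \<S>_def using n_subsets[OF U(1)] by simp
  finally show ?thesis .
qed

lemma DIAG:
  assumes s: "cfg n t X Y ex ey" and T: "finite T" "card T = t" "ex \<notin> T"
    and y: "y \<in> Y" and nT: "\<not> T \<subseteq> y"
  shows "card {a\<in>X. T \<subseteq> a} \<le> (n-1) * dfact (n - (t+2))"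
proof -
  have yP: "y \<in> perfect_matchings n" "ey \<in> y" "ex \<notin> y" using cfgD(2,5,6)[OF s] y by auto
  have finy: "finite y" using PM_mfinite[OF yP(1)] .
  define I where "I = y - {ey} - T"
  have finI: "finite I" unfolding I_def using finy by simp
  have cyT: "card (y \<inter> T) < t"
  proof -
    have "y \<inter> T \<subset> T" using nT by blast
    then show ?thesis using T psubset_card_mono by metis
  qed
  have "{a\<in>X. T \<subseteq> a} \<subseteq> (\<Union>e\<in>I. {m \<in> perfect_matchings n. insert e (insert ex T) \<subseteq> m})"
  proof
    fix a assume a: "a \<in> {a\<in>X. T \<subseteq> a}"
    have aP: "a \<in> perfect_matchings n" "ex \<in> a" "ey \<notin> a" using a cfgD(1,3,4)[OF s] by auto
    have ta: "t \<le> card (a \<inter> y)" using a cfgD(7)[OF s] y by blast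
    have "\<exists>e\<in>a \<inter> y. e \<notin> T"
    proof (rule ccontr)
      assume "\<not> (\<exists>e\<in>a \<inter> y. e \<notin> T)"
      then have "a \<inter> y \<subseteq> y \<inter> T" by blast
      then have "card (a \<inter> y) \<le> card (y \<inter> T)" using finy by (intro card_mono) auto
      then show False using ta cyT by simp
    qed
    then obtain e where e: "e \<in> a" "e \<in> y" "e \<notin> T" by blast
    have "e \<noteq> ey" using e aP by blast
    then have "e \<in> I" unfolding I_def using e by blast
    then show "a \<in> (\<Union>e\<in>I. {m \<in> perfect_matchings n. insert e (insert ex T) \<subseteq> m})"
      using a aP e by blast
  qed
  then have "card {a\<in>X. T \<subseteq> a} \<le> card (\<Union>e\<in>I. {m \<in> perfect_matchings n. insert e (insert ex T) \<subseteq> m})"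
    using finI by (intro card_mono) (auto simp: PM_finite)
  also have "\<dots> \<le> (\<Sum>e\<in>I. card {m \<in> perfect_matchings n. insert e (insert ex T) \<subseteq> m})"
    by (rule card_UN_le[OF finI])
  also have "\<dots> \<le> (\<Sum>e\<in>I. dfact (n - (t+2)))"
  proof (rule sum_mono)
    fix e assume e: "e \<in> I"
    have "e \<noteq> ex" "e \<notin> T" using e yP unfolding I_def by auto
    then have c: "card (insert e (insert ex T)) = t+2" using T by simp
    have "card {m \<in> perfect_matchings n. insert e (insert ex T) \<subseteq> m} \<le> dfact (n - card (insert e (insert ex T)))"
      by (rule cnt_le) (use T in simp)
    then show "card {m \<in> perfect_matchings n. insert e (insert ex T) \<subseteq> m} \<le> dfact (n - (t+2))" using c by simp
  qed
  also have "\<dots> = card I * dfact (n - (t+2))" by simp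
  also have "\<dots> \<le> (n-1) * dfact (n - (t+2))"
  proof (rule mult_right_mono)
    have "card I \<le> card (y - {ey})" unfolding I_def using finy by (intro card_mono) auto
    also have "\<dots> = n - 1" using PM_card[OF yP(1)] yP(2) finy by simp
    finally show "card I \<le> n - 1" .
  qed simp
  finally show ?thesis .
qed

lemma OFF:
  assumes s: "cfg n t X Y ex ey" and U: "finite U" "ex \<notin> U" "ey \<notin> U"
    and T: "T \<subseteq> U" "card T = t" and T': "T' \<subseteq> U" "card T' = t" and ne: "T \<noteq> T'"
    and tau: "(n+1)^q * dfact (n - q) \<le> dfact (n - (t+2))" and q: "1 \<le> q"
  shows "card {a\<in>X. a \<inter> U = T} * card {b\<in>Y. b \<inter> U = T'} \<le> q * dfact (n - (t+2)) * dfact (n - (t+1))"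
proof -
  define XT where "XT = {a\<in>X. a \<inter> U = T}"
  define YT where "YT = {b\<in>Y. b \<inter> U = T'}"
  define W2 where "W2 = dfact (n - (t+2))"
  define D where "D = dfact (n - (t+1))"
  have finT: "finite T" "finite T'" using T T' U finite_subset by auto
  have XTD: "card XT \<le> D"
  proof -
    have "card XT \<le> card {a\<in>X. T \<subseteq> a}" unfolding XT_def
      using cfgD(1)[OF s] by (intro card_mono) (auto intro: finite_subset[OF _ PM_finite])
    also have "\<dots> \<le> D" unfolding D_def by (rule XT_bound[OF s finT(1) T(2)]) (use T U in blast)
    finally show ?thesis .
  qed
  have sXT: "cfg n t XT Y ex ey" by (rule cfg_mono[OF s]) (auto simp: XT_def)
  have XTP: "XT \<subseteq> perfect_matchings n" using cfgD(1)[OF sXT] .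
  have cTT: "card (T \<inter> T') < t"
  proof -
    have "\<not> T \<subseteq> T'"
    proof
      assume "T \<subseteq> T'"
      then have "T = T'" using card_subset_eq[OF finT(2)] T(2) T'(2) by metis
      then show False using ne by simp
    qed
    then have "T \<inter> T' \<subset> T" by blast
    then show ?thesis using T finT psubset_card_mono by metis
  qed
  show ?thesis
  proof (cases "card XT \<le> (n+1)^q * dfact (n - q)")
    case True
    have "card YT \<le> card {b\<in>Y. T' \<subseteq> b}" unfolding YT_def
      using cfgD(2)[OF s] by (intro card_mono) (auto intro: finite_subset[OF _ PM_finite])
    also have "\<dots> \<le> D" unfolding D_def by (rule XT_bound[OF cfg_sym[OF s] finT(2) T'(2)]) (use T' U in blast)
    finally have YD: "card YT \<le> D" .
    have "card XT * card YT \<le> W2 * D" using True tau YD unfolding W2_def by (intro mult_mono) auto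
    also have "\<dots> \<le> q * W2 * D" using q by simp
    finally show ?thesis unfolding XT_def YT_def W2_def D_def .
  next
    case False
    then obtain E where E: "finite E" "card E < q" "spread n XT E"
      using core_exists[OF XTP] by (meson not_le)
    have eyE: "ey \<notin> E" by (rule core_avoid[OF sXT E(3)])
    have claim: "\<exists>e\<in>E - U. e \<in> y" if y: "y \<in> YT" for y
    proof (rule ccontr)
      assume nh: "\<not> (\<exists>e\<in>E - U. e \<in> y)"
      have yP: "y \<in> perfect_matchings n" using y cfgD(2)[OF s] unfolding YT_def by blast
      have finy: "finite y" using PM_mfinite[OF yP] .
      show False
      proof (rule hit[OF XTP E(3) yP])
        show "\<forall>g\<in>XT. E \<subseteq> g \<longrightarrow> (\<exists>e\<in>y. e \<notin> E \<and> e \<in> g)"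
        proof (intro ballI impI)
          fix g assume g: "g \<in> XT" "E \<subseteq> g"
          have tg: "t \<le> card (g \<inter> y)" using cfgD(7)[OF s] g y unfolding XT_def YT_def by blast
          have "\<exists>e\<in>g \<inter> y. e \<notin> U"
          proof (rule ccontr)
            assume "\<not> (\<exists>e\<in>g \<inter> y. e \<notin> U)"
            then have "g \<inter> y \<subseteq> T \<inter> T'" using g y unfolding XT_def YT_def by blast
            then have "card (g \<inter> y) \<le> card (T \<inter> T')" using finT by (intro card_mono) auto
            then show False using tg cTT by simp
          qed
          then obtain e where e: "e \<in> g" "e \<in> y" "e \<notin> U" by blast
          have "e \<notin> E" using nh e by blast
          then show "\<exists>e\<in>y. e \<notin> E \<and> e \<in> g" using e by blast
        qed
      qed
    qed
    define I where "I = E - U"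
    have finI: "finite I" unfolding I_def using E by simp
    have "YT \<subseteq> (\<Union>e\<in>I. {m \<in> perfect_matchings n. insert e (insert ey T') \<subseteq> m})"
    proof
      fix y assume y: "y \<in> YT"
      have "y \<in> perfect_matchings n" "ey \<in> y" "T' \<subseteq> y" using y cfgD(2,5)[OF s] unfolding YT_def by auto
      then show "y \<in> (\<Union>e\<in>I. {m \<in> perfect_matchings n. insert e (insert ey T') \<subseteq> m})"
        using claim[OF y] unfolding I_def by blast
    qed
    then have "card YT \<le> card (\<Union>e\<in>I. {m \<in> perfect_matchings n. insert e (insert ey T') \<subseteq> m})"
      using finI by (intro card_mono) (auto simp: PM_finite)
    also have "\<dots> \<le> (\<Sum>e\<in>I. card {m \<in> perfect_matchings n. insert e (insert ey T') \<subseteq> m})"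
      by (rule card_UN_le[OF finI])
    also have "\<dots> \<le> (\<Sum>e\<in>I. W2)"
    proof (rule sum_mono)
      fix e assume e: "e \<in> I"
      have "e \<noteq> ey" "e \<notin> T'" "ey \<notin> T'" using e eyE T' U unfolding I_def by auto
      then have c: "card (insert e (insert ey T')) = t+2" using T' finT by simp
      have "card {m \<in> perfect_matchings n. insert e (insert ey T') \<subseteq> m} \<le> dfact (n - card (insert e (insert ey T')))"
        by (rule cnt_le) (use finT in simp)
      then show "card {m \<in> perfect_matchings n. insert e (insert ey T') \<subseteq> m} \<le> W2" using c unfolding W2_def by simp
    qed
    also have "\<dots> = card I * W2" by simp
    also have "\<dots> \<le> q * W2"
    proof (rule mult_right_mono)
      have "card I \<le> card E" unfolding I_def using E by (intro card_mono) auto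
      then show "card I \<le> q" using E by simp
    qed simp
    finally have YT: "card YT \<le> q * W2" .
    have "card XT * card YT \<le> D * (q * W2)" using XTD YT by (intro mult_mono) auto
    then show ?thesis unfolding XT_def YT_def W2_def D_def by (simp add: algebra_simps)
  qed
qed

lemma dfact_pos: "0 < dfact k"
  by (induction k) auto

lemma dfact_mono: "a \<le> b \<Longrightarrow> dfact a \<le> dfact b"
proof (induction b)
  case 0 then show ?case by simp
next
  case (Suc b)
  show ?case
  proof (cases "a = Suc b")
    case True then show ?thesis by simp
  next
    case False
    then have "dfact a \<le> dfact b" using Suc by simp
    also have "\<dots> \<le> dfact (Suc b)" by simp
    finally show ?thesis .
  qed
qed

lemma sum_prod_bound:
  fixes x y :: "'a \<Rightarrow> nat"
  assumes fin: "finite A" and T0: "T0 \<in> A" and P: "x T0 * y T0 \<le> P"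
    and off: "\<And>T T'. T \<in> A \<Longrightarrow> T' \<in> A \<Longrightarrow> (T, T') \<noteq> (T0, T0) \<Longrightarrow> x T * y T' \<le> \<delta>"
  shows "sum x A * sum y A \<le> P + card A ^ 2 * \<delta>"
proof -
  have "sum x A * sum y A = (\<Sum>p\<in>A \<times> A. x (fst p) * y (snd p))"
    by (simp add: sum_product sum.cartesian_product case_prod_beta')
  also have "\<dots> = x T0 * y T0 + (\<Sum>p\<in>A \<times> A - {(T0,T0)}. x (fst p) * y (snd p))"
    using fin T0 by (subst sum.remove[of _ "(T0,T0)"]) auto
  also have "\<dots> \<le> P + (\<Sum>p\<in>A \<times> A - {(T0,T0)}. \<delta>)"
  proof (intro add_mono sum_mono)
    fix p assume p: "p \<in> A \<times> A - {(T0,T0)}"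
    then obtain T T' where "p = (T,T')" "T \<in> A" "T' \<in> A" "(T,T') \<noteq> (T0,T0)" by auto
    then show "x (fst p) * y (snd p) \<le> \<delta>" using off by simp
  qed (rule P)
  also have "(\<Sum>p\<in>A \<times> A - {(T0,T0)}. \<delta>) \<le> (\<Sum>p\<in>A \<times> A. \<delta>)"
    using fin by (intro sum_mono2) auto
  also have "\<dots> = card A ^ 2 * \<delta>" by (simp add: card_cartesian_product power2_eq_square)
  finally show ?thesis by simp
qed

lemma arith_final:
  fixes cX cY \<alpha> \<beta> Sx Sy c1 M w d q n :: nat
  assumes "cX \<le> \<alpha> + Sx" "cY \<le> \<beta> + Sy" "\<alpha> \<le> c1*w" "\<beta> \<le> c1*w"
    "Sx \<le> M*(d*w)" "Sy \<le> M*(d*w)" "Sx*Sy \<le> (n-1)*w*(d*w) + M^2*(q*w*(d*w))"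
    "c1^2 + 2*c1*M + M^2*q + (n-1) \<le> d" "1 \<le> d"
  shows "cX*cY \<le> (d*w)^2"
proof -
  have "cX*cY \<le> (\<alpha> + Sx)*(\<beta> + Sy)" using assms(1,2) by (intro mult_mono) auto
  also have "\<dots> = \<alpha>*\<beta> + \<alpha>*Sy + Sx*\<beta> + Sx*Sy" by (simp add: algebra_simps)
  also have "\<dots> \<le> (c1*w)*(c1*w) + (c1*w)*(M*(d*w)) + (M*(d*w))*(c1*w) + ((n-1)*w*(d*w) + M^2*(q*w*(d*w)))"
    using assms(3-7) by (intro add_mono mult_mono) auto
  also have "\<dots> = w*w*(c1^2 + d*(2*c1*M + (n-1) + M^2*q))" by (simp add: algebra_simps power2_eq_square)
  also have "\<dots> \<le> w*w*(d*(c1^2 + 2*c1*M + M^2*q + (n-1)))"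
  proof -
    have "c1^2 \<le> d*c1^2" using assms(9) by simp
    then have "c1^2 + d*(2*c1*M + (n-1) + M^2*q) \<le> d*(c1^2 + 2*c1*M + M^2*q + (n-1))"
      by (simp add: algebra_simps)
    then show ?thesis by (intro mult_left_mono) auto
  qed
  also have "\<dots> \<le> w*w*(d*d)" using assms(8) by (intro mult_left_mono) auto
  also have "\<dots> = (d*w)^2" by (simp add: algebra_simps power2_eq_square)
  finally show ?thesis .
qed

lemma choose_le_pow2q:
  assumes "card U \<le> 2*q"
  shows "card U choose k \<le> (2*q)^k"
proof (cases "k \<le> card U")
  case True
  then have "card U choose k \<le> card U ^ k" by (rule binomial_le_pow)
  also have "\<dots> \<le> (2*q)^k" using assms by (rule power_mono) simp
  finally show ?thesis .
next
  case False then show ?thesis by (simp add: binomial_eq_0)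
qed

lemma R2_consequence:
  fixes c1 M q t n :: nat
  assumes "c1 \<le> (2*q)^(t+1)" "M \<le> (2*q)^t" "4*(2*q)^(2*t+2) + 2*t + 2 \<le> n" "1 \<le> q"
  shows "c1^2 + 2*c1*M + M^2*q + (n-1) \<le> 2*(n-(t+2))+1"
proof -
  define Q where "Q = 2*q"
  have Q1: "1 \<le> Q" using assms(4) unfolding Q_def by simp
  have a: "c1^2 \<le> Q^(2*t+2)"
  proof -
    have "c1^2 \<le> (Q^(t+1))^2" using assms(1) unfolding Q_def by (intro power_mono) auto
    also have "\<dots> = Q^((t+1)*2)" by (rule power_mult[symmetric])
    also have "(t+1)*2 = 2*t+2" by simp
    finally show ?thesis .
  qed
  have b: "c1*M \<le> Q^(2*t+2)"
  proof -
    have "c1*M \<le> Q^(t+1) * Q^t" using assms(1,2) unfolding Q_def by (intro mult_mono) auto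
    also have "\<dots> = Q^(2*t+1)"
    proof -
      have "2*t+1 = (t+1)+t" by simp
      then show ?thesis by (simp only: power_add)
    qed
    also have "\<dots> \<le> Q^(2*t+2)" using Q1 by (intro power_increasing) auto
    finally show ?thesis .
  qed
  have c: "M^2*q \<le> Q^(2*t+2)"
  proof -
    have "M^2*q \<le> (Q^t)^2 * Q" using assms(2) unfolding Q_def by (intro mult_mono power_mono) auto
    also have "\<dots> = Q^(2*t+1)"
      by (metis (no_types, lifting) add.commute mult.commute power_add power_mult power_one_right)
    also have "\<dots> \<le> Q^(2*t+2)" using Q1 by (intro power_increasing) auto
    finally show ?thesis .
  qed
  have "c1^2 + 2*c1*M + M^2*q \<le> 4*Q^(2*t+2)" using a b c by simp
  then show ?thesis using assms(3) unfolding Q_def by simp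
qed

lemma cnt_single: "card {m \<in> perfect_matchings n. e \<in> m} \<le> dfact (n - 1)"
  using cnt_le[of "{e}" n] by simp

lemma main_abs:
  assumes s: "cfg n t X Y ex ey"
    and R1: "(n+1)^q * dfact (n-q) * dfact (n-1) \<le> dfact (n-(t+2))^2"
    and R2: "4*(2*q)^(2*t+2) + 2*t + 2 \<le> n"
    and q: "1 \<le> q"
  shows "card X * card Y \<le> dfact (n-(t+1))^2"
proof -
  define W2 where "W2 = dfact (n-(t+2))"
  define D where "D = dfact (n-(t+1))"
  define d where "d = 2*(n-(t+2))+1"
  define \<tau> where "\<tau> = (n+1)^q * dfact (n-q)"
  have nt: "n-(t+1) = Suc (n-(t+2))" using R2 by simp
  have DdW: "D = d * W2" unfolding D_def d_def W2_def nt by simp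
  have W2pos: "0 < W2" unfolding W2_def by (rule dfact_pos)
  have W2le: "W2 \<le> dfact (n-1)" unfolding W2_def by (rule dfact_mono) simp
  have tauW2: "\<tau> \<le> W2"
  proof -
    have "\<tau> * W2 \<le> \<tau> * dfact (n-1)" using W2le by simp
    also have "\<dots> \<le> W2 * W2" using R1 unfolding \<tau>_def W2_def by (simp add: power2_eq_square)
    finally show ?thesis using W2pos by simp
  qed
  have W2D: "W2^2 \<le> D^2" unfolding DdW d_def by (intro power_mono) auto
  have XP: "X \<subseteq> perfect_matchings n" and YP: "Y \<subseteq> perfect_matchings n" using cfgD[OF s] by auto
  have finX: "finite X" using XP PM_finite finite_subset by blast
  have finY: "finite Y" using YP PM_finite finite_subset by blast
  have cardY1: "card Y \<le> dfact (n-1)"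
  proof -
    have "card Y \<le> card {m \<in> perfect_matchings n. ey \<in> m}"
      using YP cfgD(5)[OF s] by (intro card_mono) (auto simp: PM_finite)
    then show ?thesis using cnt_single[of n ey] by simp
  qed
  have cardX1: "card X \<le> dfact (n-1)"
  proof -
    have "card X \<le> card {m \<in> perfect_matchings n. ex \<in> m}"
      using XP cfgD(3)[OF s] by (intro card_mono) (auto simp: PM_finite)
    then show ?thesis using cnt_single[of n ex] by simp
  qed
  show ?thesis
  proof (cases "card X \<le> \<tau> \<or> card Y \<le> \<tau>")
    case True
    have "card X * card Y \<le> \<tau> * dfact (n-1)"
    proof (cases "card X \<le> \<tau>")
      case True then show ?thesis using cardY1 by (intro mult_mono) auto
    next
      case False
      then have "card Y \<le> \<tau>" using \<open>card X \<le> \<tau> \<or> card Y \<le> \<tau>\<close> by simp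
      then have "card X * card Y \<le> dfact (n-1) * \<tau>" using cardX1 by (intro mult_mono) auto
      then show ?thesis by (simp add: mult.commute)
    qed
    also have "\<dots> \<le> W2^2" using R1 unfolding \<tau>_def W2_def by simp
    also have "\<dots> \<le> D^2" by (rule W2D)
    finally show ?thesis unfolding D_def .
  next
    case False
    then have bigX: "(n+1)^q * dfact (n-q) < card X" and bigY: "(n+1)^q * dfact (n-q) < card Y"
      unfolding \<tau>_def by auto
    obtain Ex0 where Ex0: "finite Ex0" "card Ex0 < q" "spread n X Ex0" using core_exists[OF XP bigX] by blast
    obtain Ey0 where Ey0: "finite Ey0" "card Ey0 < q" "spread n Y Ey0" using core_exists[OF YP bigY] by blast
    have s': "cfg n t Y X ey ex" by (rule cfg_sym[OF s])
    have eyEx0: "ey \<notin> Ex0" by (rule core_avoid[OF s Ex0(3)])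
    have exEy0: "ex \<notin> Ey0" by (rule core_avoid[OF s' Ey0(3)])
    define U where "U = (Ex0 \<union> Ey0) - {ex, ey}"
    have finU: "finite U" unfolding U_def using Ex0 Ey0 by simp
    have exU: "ex \<notin> U" and eyU: "ey \<notin> U" unfolding U_def by auto
    have cardU: "card U \<le> 2*q"
    proof -
      have "card U \<le> card (Ex0 \<union> Ey0)" unfolding U_def using Ex0 Ey0 by (intro card_mono) auto
      also have "\<dots> \<le> card Ex0 + card Ey0" by (rule card_Un_le)
      finally show ?thesis using Ex0 Ey0 by simp
    qed
    have aU: "t \<le> card (a \<inter> U)" if a: "a \<in> X" for a
    proof -
      have "t \<le> card (a \<inter> Ey0)" using U1[OF s' Ey0(3) a] .
      also have "\<dots> \<le> card (a \<inter> U)"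
      proof (rule card_mono)
        show "finite (a \<inter> U)" using finU by simp
        show "a \<inter> Ey0 \<subseteq> a \<inter> U" unfolding U_def using cfgD(4)[OF s a] exEy0 by blast
      qed
      finally show ?thesis .
    qed
    have bU: "t \<le> card (b \<inter> U)" if b: "b \<in> Y" for b
    proof -
      have "t \<le> card (b \<inter> Ex0)" using U1[OF s Ex0(3) b] .
      also have "\<dots> \<le> card (b \<inter> U)"
      proof (rule card_mono)
        show "finite (b \<inter> U)" using finU by simp
        show "b \<inter> Ex0 \<subseteq> b \<inter> U" unfolding U_def using cfgD(6)[OF s b] eyEx0 by blast
      qed
      finally show ?thesis .
    qed
    define \<T> where "\<T> = {T. T \<subseteq> U \<and> card T = t}"
    have fin\<T>: "finite \<T>" unfolding \<T>_def using finU by simp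
    define M where "M = card \<T>"
    have M_eq: "M = card U choose t" unfolding M_def \<T>_def by (rule n_subsets[OF finU])
    define c1 where "c1 = card U choose (t+1)"
    define x where "x T = card {a\<in>X. a \<inter> U = T}" for T
    define y where "y T = card {b\<in>Y. b \<inter> U = T}" for T
    define Xp where "Xp = {a\<in>X. t+1 \<le> card (a \<inter> U)}"
    define Yp where "Yp = {b\<in>Y. t+1 \<le> card (b \<inter> U)}"
    have Tprops: "finite T" "card T = t" "ex \<notin> T" "ey \<notin> T" "T \<subseteq> U" if "T \<in> \<T>" for T
      using that finU exU eyU unfolding \<T>_def by (auto intro: finite_subset)
    have xD: "x T \<le> D" if T: "T \<in> \<T>" for T
    proof -
      have "x T \<le> card {a\<in>X. T \<subseteq> a}" unfolding x_def using finX by (intro card_mono) auto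
      also have "\<dots> \<le> D" unfolding D_def using XT_bound[OF s Tprops(1-3)[OF T]] .
      finally show ?thesis .
    qed
    have yD: "y T \<le> D" if T: "T \<in> \<T>" for T
    proof -
      have "y T \<le> card {b\<in>Y. T \<subseteq> b}" unfolding y_def using finY by (intro card_mono) auto
      also have "\<dots> \<le> D" unfolding D_def using XT_bound[OF s' Tprops(1,2,4)[OF T]] .
      finally show ?thesis .
    qed
    have cX: "card X \<le> card Xp + sum x \<T>"
    proof -
      have "X \<subseteq> Xp \<union> (\<Union>T\<in>\<T>. {a\<in>X. a \<inter> U = T})"
      proof
        fix a assume a: "a \<in> X"
        show "a \<in> Xp \<union> (\<Union>T\<in>\<T>. {a\<in>X. a \<inter> U = T})"
        proof (cases "t+1 \<le> card (a \<inter> U)")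
          case True then show ?thesis unfolding Xp_def using a by blast
        next
          case False
          then have "card (a \<inter> U) = t" using aU[OF a] by simp
          then have "a \<inter> U \<in> \<T>" unfolding \<T>_def by blast
          then show ?thesis using a by blast
        qed
      qed
      then have "card X \<le> card (Xp \<union> (\<Union>T\<in>\<T>. {a\<in>X. a \<inter> U = T}))"
        by (intro card_mono) (use finX fin\<T> in \<open>auto simp: Xp_def\<close>)
      also have "\<dots> \<le> card Xp + card (\<Union>T\<in>\<T>. {a\<in>X. a \<inter> U = T})" by (rule card_Un_le)
      also have "card (\<Union>T\<in>\<T>. {a\<in>X. a \<inter> U = T}) \<le> sum x \<T>"
        unfolding x_def by (rule card_UN_le[OF fin\<T>])
      finally show ?thesis by simp
    qed
    have cY: "card Y \<le> card Yp + sum y \<T>"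
    proof -
      have "Y \<subseteq> Yp \<union> (\<Union>T\<in>\<T>. {b\<in>Y. b \<inter> U = T})"
      proof
        fix b assume b: "b \<in> Y"
        show "b \<in> Yp \<union> (\<Union>T\<in>\<T>. {b\<in>Y. b \<inter> U = T})"
        proof (cases "t+1 \<le> card (b \<inter> U)")
          case True then show ?thesis unfolding Yp_def using b by blast
        next
          case False
          then have "card (b \<inter> U) = t" using bU[OF b] by simp
          then have "b \<inter> U \<in> \<T>" unfolding \<T>_def by blast
          then show ?thesis using b by blast
        qed
      qed
      then have "card Y \<le> card (Yp \<union> (\<Union>T\<in>\<T>. {b\<in>Y. b \<inter> U = T}))"
        by (intro card_mono) (use finY fin\<T> in \<open>auto simp: Yp_def\<close>)
      also have "\<dots> \<le> card Yp + card (\<Union>T\<in>\<T>. {b\<in>Y. b \<inter> U = T})" by (rule card_Un_le)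
      also have "card (\<Union>T\<in>\<T>. {b\<in>Y. b \<inter> U = T}) \<le> sum y \<T>"
        unfolding y_def by (rule card_UN_le[OF fin\<T>])
      finally show ?thesis by simp
    qed
    have Xpb: "card Xp \<le> c1 * W2" unfolding Xp_def c1_def W2_def by (rule Xplus[OF s finU exU])
    have Ypb: "card Yp \<le> c1 * W2" unfolding Yp_def c1_def W2_def by (rule Xplus[OF s' finU eyU])
    have Sx: "sum x \<T> \<le> M * (d * W2)"
    proof -
      have "sum x \<T> \<le> (\<Sum>T\<in>\<T>. D)" using xD by (intro sum_mono) auto
      then show ?thesis unfolding M_def DdW by simp
    qed
    have Sy: "sum y \<T> \<le> M * (d * W2)"
    proof -
      have "sum y \<T> \<le> (\<Sum>T\<in>\<T>. D)" using yD by (intro sum_mono) auto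
      then show ?thesis unfolding M_def DdW by simp
    qed
    have tau': "(n+1)^q * dfact (n - q) \<le> dfact (n - (t+2))" using tauW2 unfolding \<tau>_def W2_def .
    define \<delta> where "\<delta> = q * W2 * D"
    have off: "x T * y T' \<le> \<delta>" if "T \<in> \<T>" "T' \<in> \<T>" "T \<noteq> T'" for T T'
      unfolding x_def y_def \<delta>_def W2_def D_def
      by (rule OFF[OF s finU exU eyU]) (use that tau' q in \<open>auto simp: \<T>_def\<close>)
    show ?thesis
    proof (cases "\<exists>T0\<in>\<T>. (\<forall>a\<in>X. T0 \<subseteq> a) \<and> (\<forall>b\<in>Y. T0 \<subseteq> b)")
      case True
      then obtain T0 where T0: "T0 \<in> \<T>" "\<forall>a\<in>X. T0 \<subseteq> a" "\<forall>b\<in>Y. T0 \<subseteq> b" by blast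
      have "{a\<in>X. T0 \<subseteq> a} = X" using T0 by blast
      then have "card X \<le> card {a\<in>X. T0 \<subseteq> a}" by simp
      also have "\<dots> \<le> D" unfolding D_def using XT_bound[OF s Tprops(1-3)[OF T0(1)]] .
      finally have cXD: "card X \<le> D" .
      have "{b\<in>Y. T0 \<subseteq> b} = Y" using T0 by blast
      then have "card Y \<le> card {b\<in>Y. T0 \<subseteq> b}" by simp
      also have "\<dots> \<le> D" unfolding D_def using XT_bound[OF s' Tprops(1,2,4)[OF T0(1)]] .
      finally have cYD: "card Y \<le> D" .
      have "card X * card Y \<le> D^2" using cXD cYD by (simp add: power2_eq_square mult_mono)
      then show ?thesis unfolding D_def .
    next
      case noT: False
      have SS: "sum x \<T> * sum y \<T> \<le> (n-1)*W2*(d*W2) + M^2*(q*W2*(d*W2))"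
      proof (cases "\<T> = {}")
        case True then show ?thesis by simp
      next
        case False
        obtain T0 where T0: "T0 \<in> \<T>" "\<And>T. T \<in> \<T> \<Longrightarrow> x T * y T \<le> x T0 * y T0"
        proof -
          have "Max ((\<lambda>T. x T * y T) ` \<T>) \<in> (\<lambda>T. x T * y T) ` \<T>" using fin\<T> False by (intro Max_in) auto
          then obtain T0 where "T0 \<in> \<T>" "x T0 * y T0 = Max ((\<lambda>T. x T * y T) ` \<T>)" by auto
          moreover have "\<And>T. T \<in> \<T> \<Longrightarrow> x T * y T \<le> Max ((\<lambda>T. x T * y T) ` \<T>)" using fin\<T> by simp
          ultimately show ?thesis using that by metis
        qed
        have P: "x T0 * y T0 \<le> (n-1)*W2*(d*W2)"
        proof (cases "\<exists>b\<in>Y. \<not> T0 \<subseteq> b")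
          case True
          then obtain b where b: "b \<in> Y" "\<not> T0 \<subseteq> b" by blast
          have "x T0 \<le> card {a\<in>X. T0 \<subseteq> a}" unfolding x_def using finX by (intro card_mono) auto
          also have "\<dots> \<le> (n-1) * W2" unfolding W2_def by (rule DIAG[OF s Tprops(1-3)[OF T0(1)] b])
          finally have "x T0 * y T0 \<le> ((n-1) * W2) * D" using yD[OF T0(1)] by (intro mult_mono) auto
          then show ?thesis unfolding DdW by (simp add: algebra_simps)
        next
          case False
          then have allb: "\<forall>b\<in>Y. T0 \<subseteq> b" by simp
          have "\<not> ((\<forall>a\<in>X. T0 \<subseteq> a) \<and> (\<forall>b\<in>Y. T0 \<subseteq> b))"
          proof
            assume h: "(\<forall>a\<in>X. T0 \<subseteq> a) \<and> (\<forall>b\<in>Y. T0 \<subseteq> b)"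
            have "\<exists>T0\<in>\<T>. (\<forall>a\<in>X. T0 \<subseteq> a) \<and> (\<forall>b\<in>Y. T0 \<subseteq> b)" using h T0(1) by (intro bexI[where x=T0])
            with noT show False by contradiction
          qed
          then have "\<not> (\<forall>a\<in>X. T0 \<subseteq> a)" using allb by simp
          then obtain a where a: "a \<in> X" "\<not> T0 \<subseteq> a" by blast
          have "y T0 \<le> card {b\<in>Y. T0 \<subseteq> b}" unfolding y_def using finY by (intro card_mono) auto
          also have "\<dots> \<le> (n-1) * W2" unfolding W2_def by (rule DIAG[OF s' Tprops(1,2,4)[OF T0(1)] a])
          finally have "x T0 * y T0 \<le> D * ((n-1) * W2)" using xD[OF T0(1)] by (intro mult_mono) auto
          then show ?thesis unfolding DdW by (simp add: algebra_simps)
        qed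
        have offall: "x T * y T' \<le> \<delta>" if "T \<in> \<T>" "T' \<in> \<T>" "(T, T') \<noteq> (T0, T0)" for T T'
        proof (cases "T = T'")
          case False then show ?thesis using off that by blast
        next
          case True
          then have TT0: "T \<noteq> T0" using that by simp
          have "(x T * y T)^2 \<le> (x T * y T) * (x T0 * y T0)"
            using T0(2)[OF that(1)] by (simp add: power2_eq_square)
          also have "\<dots> = (x T * y T0) * (x T0 * y T)" by (simp add: algebra_simps)
          also have "\<dots> \<le> \<delta> * \<delta>"
            using off[OF that(1) T0(1) TT0] off[OF T0(1) that(1) TT0[symmetric]] by (intro mult_mono) auto
          also have "\<dots> = \<delta>^2" by (simp add: power2_eq_square)
          finally have "(x T * y T)^2 \<le> \<delta>^2" .
          then have "x T * y T \<le> \<delta>" by (rule power2_le_imp_le) simp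
          then show ?thesis using True by simp
        qed
        have "sum x \<T> * sum y \<T> \<le> (n-1)*W2*(d*W2) + card \<T> ^ 2 * \<delta>"
          by (rule sum_prod_bound[where x=x and y=y, OF fin\<T> T0(1) P offall])
        then show ?thesis unfolding M_def \<delta>_def DdW by (simp add: algebra_simps)
      qed
      have c1b: "c1 \<le> (2*q)^(t+1)" unfolding c1_def by (rule choose_le_pow2q[OF cardU])
      have Mb: "M \<le> (2*q)^t" unfolding M_eq by (rule choose_le_pow2q[OF cardU])
      have fin: "c1^2 + 2*c1*M + M^2*q + (n-1) \<le> d" unfolding d_def by (rule R2_consequence[OF c1b Mb R2 q])
      have "card X * card Y \<le> (d * W2)^2"
        by (rule arith_final[OF cX cY Xpb Ypb Sx Sy SS fin]) (simp add: d_def)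
      then show ?thesis unfolding DdW[symmetric] D_def .
    qed
  qed
qed

lemma polyexp: "\<exists>L0::nat. \<forall>L\<ge>L0. C * (L+1)^k \<le> (2::nat)^L"
proof -
  have lim: "((\<lambda>x::real. real C * (x+1)^k / 2 powr x) \<longlongrightarrow> 0) at_top"
    by real_asymp
  have ev: "eventually (\<lambda>x::real. real C * (x+1)^k / 2 powr x < 1) at_top"
    by (rule order_tendstoD(2)[OF lim]) simp
  have "eventually (\<lambda>L::nat. real C * (real L+1)^k / 2 powr (real L) < 1) sequentially"
    using ev filterlim_real_sequentially by (rule eventually_compose_filterlim)
  then obtain L0 where L0: "\<And>L. L \<ge> L0 \<Longrightarrow> real C * (real L+1)^k / 2 powr (real L) < 1"
    unfolding eventually_sequentially by blast
  show ?thesis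
  proof (intro exI allI impI)
    fix L assume "L0 \<le> L"
    then have h: "real C * (real L+1)^k / 2 powr (real L) < 1" by (rule L0)
    have p: "(2::real) powr (real L) = 2^L" by (simp add: powr_realpow)
    have "real C * (real L+1)^k < 2^L" using h unfolding p by (simp add: divide_less_eq)
    then have "real (C * (L+1)^k) < real ((2::nat)^L)" by (simp add: add.commute)
    then show "C * (L+1)^k \<le> 2^L" by linarith
  qed
qed

lemma dfact_lower: "(2*a+1)^b * dfact a \<le> dfact (a+b)"
proof (induction b)
  case 0 then show ?case by simp
next
  case (Suc b)
  have "(2*a+1)^(Suc b) * dfact a = (2*a+1) * ((2*a+1)^b * dfact a)" by (simp add: algebra_simps)
  also have "\<dots> \<le> (2*(a+b)+1) * dfact (a+b)" using Suc by (intro mult_mono) auto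
  also have "\<dots> = dfact (a + Suc b)" by simp
  finally show ?case .
qed

lemma dfact_upper: "dfact (a+b) \<le> (2*(a+b))^b * dfact a"
proof (induction b)
  case 0 then show ?case by simp
next
  case (Suc b)
  have "dfact (a + Suc b) = (2*(a+b)+1) * dfact (a+b)" by simp
  also have "\<dots> \<le> (2*(a + Suc b)) * ((2*(a+b))^b * dfact a)" using Suc by (intro mult_mono) auto
  also have "\<dots> \<le> (2*(a + Suc b)) * ((2*(a+Suc b))^b * dfact a)"
  proof -
    have "(2*(a+b))^b \<le> (2*(a+Suc b))^b" by (rule power_mono) auto
    then show ?thesis by (intro mult_left_mono mult_right_mono) auto
  qed
  also have "\<dots> = (2*(a + Suc b))^(Suc b) * dfact a" by (simp add: algebra_simps)
  finally show ?case .
qed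

lemma R1_holds:
  fixes n t L :: nat
  defines "q \<equiv> t + 2 + 3*(2*t+3)*L"
  assumes L: "2*n+2 \<le> 2^L" and big: "6*q + 1 \<le> 2*n"
  shows "(n+1)^q * dfact (n-q) * dfact (n-1) \<le> dfact (n-(t+2))^2"
proof -
  define m where "m = 3*(2*t+3)*L"
  define K where "K = (2*t+3)*L"
  define W2 where "W2 = dfact (n-(t+2))"
  define r where "r = 2*(n-q)+1"
  have qm: "q = t+2+m" unfolding q_def m_def by simp
  have up: "dfact (n-1) \<le> (2*n)^(t+1) * W2"
  proof -
    have e: "(n-(t+2)) + (t+1) = n - 1" using big qm by simp
    have "dfact (n-1) = dfact ((n-(t+2)) + (t+1))" by (simp only: e)
    also have "\<dots> \<le> (2*((n-(t+2)) + (t+1)))^(t+1) * dfact (n-(t+2))" by (rule dfact_upper)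
    also have "\<dots> \<le> (2*n)^(t+1) * W2"
    proof -
      have "2*((n-(t+2)) + (t+1)) \<le> 2*n" unfolding e by simp
      then have "(2*((n-(t+2)) + (t+1)))^(t+1) \<le> (2*n)^(t+1)" by (rule power_mono) simp
      then show ?thesis unfolding W2_def by (rule mult_right_mono) simp
    qed
    finally show ?thesis .
  qed
  have low: "r^m * dfact (n-q) \<le> W2"
  proof -
    have "r^m * dfact (n-q) \<le> dfact ((n-q) + m)" unfolding r_def by (rule dfact_lower)
    also have "(n-q) + m = n-(t+2)" using big qm by simp
    finally show ?thesis unfolding W2_def .
  qed
  have r4: "4*(n+1) \<le> 3*r" unfolding r_def using big by simp
  have key: "(n+1)^q * (2*n)^(t+1) \<le> r^m"
  proof -
    have a: "(n+1)^(t+2) * (2*n)^(t+1) \<le> 2^K"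
    proof -
      have "(n+1)^(t+2) * (2*n)^(t+1) \<le> (2*n+2)^(t+2) * (2*n+2)^(t+1)"
        by (intro mult_mono power_mono) auto
      also have "\<dots> = (2*n+2)^(2*t+3)"
      proof -
        have "2*t+3 = (t+2)+(t+1)" by simp
        then show ?thesis by (simp only: power_add)
      qed
      also have "\<dots> \<le> (2^L)^(2*t+3)" using L by (rule power_mono) simp
      also have "\<dots> = 2^K" unfolding K_def by (simp add: power_mult[symmetric] mult.commute)
      finally show ?thesis .
    qed
    have b: "3^m * 2^K \<le> (4::nat)^m"
    proof -
      have mK: "m = 3*K" unfolding m_def K_def by simp
      have "3^m * 2^K = ((3::nat)^3)^K * 2^K" unfolding mK by (simp only: power_mult)
      also have "\<dots> = (27::nat)^K * 2^K" by simp
      also have "\<dots> = 54^K" by (simp add: power_mult_distrib[symmetric])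
      also have "\<dots> \<le> 64^K" by (rule power_mono) auto
      also have "\<dots> = ((4::nat)^3)^K" by simp
      also have "\<dots> = 4^m" unfolding mK by (simp only: power_mult)
      finally show ?thesis .
    qed
    have "4^m * ((n+1)^q * (2*n)^(t+1)) = ((n+1)^(t+2) * (2*n)^(t+1)) * (4*(n+1))^m"
    proof -
      have e1: "(n+1)^q = (n+1)^(t+2) * (n+1)^m" unfolding qm by (simp only: power_add)
      have e2: "(4*(n+1))^m = 4^m * (n+1)^m" by (rule power_mult_distrib)
      show ?thesis unfolding e1 e2 by (simp only: mult.assoc mult.commute mult.left_commute)
    qed
    also have "\<dots> \<le> 2^K * (3*r)^m"
    proof (rule mult_mono)
      show "(4*(n+1))^m \<le> (3*r)^m" using r4 by (rule power_mono) simp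
    qed (use a in auto)
    also have "\<dots> = (3^m * 2^K) * r^m" by (simp add: power_mult_distrib algebra_simps)
    also have "\<dots> \<le> 4^m * r^m" using b by (intro mult_right_mono) auto
    finally show ?thesis by simp
  qed
  have "(n+1)^q * dfact (n-q) * dfact (n-1) \<le> (n+1)^q * dfact (n-q) * ((2*n)^(t+1) * W2)"
    using up by (intro mult_left_mono) auto
  also have "\<dots> = ((n+1)^q * (2*n)^(t+1)) * dfact (n-q) * W2" by (simp add: algebra_simps)
  also have "\<dots> \<le> r^m * dfact (n-q) * W2" using key by (intro mult_right_mono) auto
  also have "\<dots> \<le> W2 * W2" using low by (intro mult_right_mono) auto
  finally show ?thesis unfolding W2_def by (simp add: power2_eq_square)
qed

lemma restrict_cfg:
  assumes F: "F \<subseteq> perfect_matchings n" and ti: "t_intersecting t F"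
    and ij: "i \<noteq> j" and ik: "i \<noteq> k" and jk: "j \<noteq> k"
  shows "cfg n t (restrict_edge F i j) (restrict_edge F i k) {i,j} {i,k}"
proof -
  have neq: "{i,j} \<noteq> {i,k}"
  proof
    assume "{i,j} = {i,k}"
    then have "j \<in> {i,k}" by blast
    then show False using ij jk by blast
  qed
  have two: "{i,k} \<notin> m" if "m \<in> perfect_matchings n" "{i,j} \<in> m" for m
  proof
    assume "{i,k} \<in> m"
    have "m \<in> PMon {0..<2*n}" using that(1) by (simp add: PM_eq)
    then have "{i,j} = {i,k}" using PMon_disj that(2) \<open>{i,k} \<in> m\<close> by blast
    then show False using neq by simp
  qed
  have two': "{i,j} \<notin> m" if "m \<in> perfect_matchings n" "{i,k} \<in> m" for m
  proof
    assume "{i,j} \<in> m"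
    have "m \<in> PMon {0..<2*n}" using that(1) by (simp add: PM_eq)
    then have "{i,j} = {i,k}" using PMon_disj that(2) \<open>{i,j} \<in> m\<close> by blast
    then show False using neq by simp
  qed
  show ?thesis
  proof (rule cfgI)
    show "restrict_edge F i j \<subseteq> perfect_matchings n" "restrict_edge F i k \<subseteq> perfect_matchings n"
      using F unfolding restrict_edge_def by auto
  next
    fix x assume "x \<in> restrict_edge F i j"
    then show "{i,j} \<in> x" "{i,k} \<notin> x" using two F unfolding restrict_edge_def by auto
  next
    fix y assume "y \<in> restrict_edge F i k"
    then show "{i,k} \<in> y" "{i,j} \<notin> y" using two' F unfolding restrict_edge_def by auto
  next
    fix x y assume "x \<in> restrict_edge F i j" "y \<in> restrict_edge F i k"
    then show "t \<le> card (x \<inter> y)" using ti unfolding restrict_edge_def t_intersecting_def by blast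
  qed
qed

theorem mainTheorem20:
  "\<forall>t::nat. \<exists>n0::nat. \<forall>n\<ge>n0. \<forall>F i j k.
     F \<subseteq> perfect_matchings n \<longrightarrow> t_intersecting t F \<longrightarrow>
     i < 2 * n \<longrightarrow> j < 2 * n \<longrightarrow> k < 2 * n \<longrightarrow>
     i \<noteq> j \<longrightarrow> i \<noteq> k \<longrightarrow> j \<noteq> k \<longrightarrow>
     card (restrict_edge F i j) * card (restrict_edge F i k) \<le> (dfact (n - t - 1))\<^sup>2"
proof
  fix t :: nat
  define c0 where "c0 = 2*(t+2) + 6*(2*t+3)"
  define C where "C = 16*c0^(2*t+2) + 8*t + 12"
  obtain L0 where L0: "\<And>L. L \<ge> L0 \<Longrightarrow> C * (L+1)^(2*t+2) \<le> (2::nat)^L"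
    using polyexp[of C "2*t+2"] by blast
  show "\<exists>n0::nat. \<forall>n\<ge>n0. \<forall>F i j k.
     F \<subseteq> perfect_matchings n \<longrightarrow> t_intersecting t F \<longrightarrow>
     i < 2 * n \<longrightarrow> j < 2 * n \<longrightarrow> k < 2 * n \<longrightarrow>
     i \<noteq> j \<longrightarrow> i \<noteq> k \<longrightarrow> j \<noteq> k \<longrightarrow>
     card (restrict_edge F i j) * card (restrict_edge F i k) \<le> (dfact (n - t - 1))\<^sup>2"
  proof (intro exI allI impI)
    fix n :: nat and F :: "nat set set set" and i j k :: nat
    assume n: "2^L0 \<le> n" and F: "F \<subseteq> perfect_matchings n" and ti: "t_intersecting t F"
      and ij: "i \<noteq> j" and ik: "i \<noteq> k" and jk: "j \<noteq> k"
    define L where "L = (LEAST L. 2*n+2 \<le> (2::nat)^L)"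
    have ex: "\<exists>L. 2*n+2 \<le> (2::nat)^L"
    proof
      show "2*n+2 \<le> (2::nat)^(2*n+2)" using less_exp[of "2*n+2"] by simp
    qed
    have L1: "2*n+2 \<le> (2::nat)^L" unfolding L_def by (rule LeastI_ex[OF ex])
    have Lpos: "L \<noteq> 0" using L1 by (intro notI) simp
    have "\<not> (2*n+2 \<le> (2::nat)^(L-1))"
    proof
      assume h: "2*n+2 \<le> (2::nat)^(L-1)"
      have "(LEAST L. 2*n+2 \<le> (2::nat)^L) \<le> L-1" by (rule Least_le[of "\<lambda>L. 2*n+2 \<le> (2::nat)^L", OF h])
      then have "L \<le> L - 1" unfolding L_def .
      then show False using Lpos by simp
    qed
    then have "(2::nat)^(L-1) < 2*n+2" by simp
    moreover have "(2::nat)^L = 2 * 2^(L-1)"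
    proof -
      have "L = Suc (L-1)" using Lpos by simp
      then have "(2::nat)^L = 2^(Suc (L-1))" by (rule arg_cong)
      then show ?thesis by (simp only: power_Suc)
    qed
    ultimately have L2: "(2::nat)^L \<le> 4*n+4" by simp
    have "(2::nat)^L0 < 2^L" using n L1 by linarith
    then have "L0 < L" by simp
    then have polyL: "C * (L+1)^(2*t+2) \<le> 2^L" using L0 by simp
    define q where "q = t + 2 + 3*(2*t+3)*L"
    have q1: "1 \<le> q" unfolding q_def by simp
    have q2: "2*q \<le> c0 * (L+1)" unfolding q_def c0_def by (simp add: algebra_simps)
    have R2: "4*(2*q)^(2*t+2) + 2*t + 2 \<le> n"
    proof -
      have "(2*q)^(2*t+2) \<le> (c0*(L+1))^(2*t+2)" using q2 by (rule power_mono) simp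
      also have "\<dots> = c0^(2*t+2) * (L+1)^(2*t+2)" by (rule power_mult_distrib)
      finally have a: "(2*q)^(2*t+2) \<le> c0^(2*t+2) * (L+1)^(2*t+2)" .
      have b: "1 \<le> (L+1)^(2*t+2)" using one_le_power[of "L+1" "2*t+2"] by simp
      have "4*(4*(2*q)^(2*t+2) + 2*t + 2) + 4 \<le> 16*(c0^(2*t+2) * (L+1)^(2*t+2)) + (8*t+12) * (L+1)^(2*t+2)"
      proof -
        have key: "\<And>P A Z::nat. P \<le> A \<Longrightarrow> 1 \<le> Z \<Longrightarrow> 4*(4*P + 2*t + 2) + 4 \<le> 16*A + (8*t+12)*Z"
        proof -
          fix P A Z :: nat assume h: "P \<le> A" "1 \<le> Z"
          have "(8*t+12)*1 \<le> (8*t+12)*Z" using h(2) by (rule mult_left_mono) simp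
          then have w: "8*t+12 \<le> (8*t+12)*Z" by simp
          have gen: "4*(4*P + 2*t + 2) + 4 \<le> 16*A + W" if hw: "8*t+12 \<le> W" for W
            using h(1) hw by presburger
          show "4*(4*P + 2*t + 2) + 4 \<le> 16*A + (8*t+12)*Z" by (rule gen[OF w])
        qed
        show ?thesis by (rule key[OF a b])
      qed
      also have "\<dots> = C * (L+1)^(2*t+2)" unfolding C_def by (simp add: algebra_simps)
      also have "\<dots> \<le> 4*n+4" using polyL L2 by simp
      finally show ?thesis by simp
    qed
    have big: "6*q + 1 \<le> 2*n"
    proof -
      have "2*q \<le> (2*q)^(2*t+2)" using q1 by (intro self_le_power) auto
      moreover have "6*q+1 \<le> 2*n" if "2*q \<le> Z" "4*Z + 2*t + 2 \<le> n" for Z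
        using that q1 by linarith
      ultimately show ?thesis using R2 by blast
    qed
    have R1: "(n+1)^q * dfact (n-q) * dfact (n-1) \<le> dfact (n-(t+2))^2"
      unfolding q_def by (rule R1_holds[OF L1]) (use big in \<open>simp add: q_def\<close>)
    have "card (restrict_edge F i j) * card (restrict_edge F i k) \<le> dfact (n-(t+1))^2"
      by (rule main_abs[OF restrict_cfg[OF F ti ij ik jk] R1 R2 q1])
    then show "card (restrict_edge F i j) * card (restrict_edge F i k) \<le> (dfact (n - t - 1))\<^sup>2"
      by simp
  qed
qed

end
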